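(* Let $\mathbf{x}\in(\Sigma^* )^\circ$ and let $\mathbf{y}\in(\Sigma^* )^\circ$ be the gradient certificate of the polynomial $\mathbf{t}-c\mathbf{1}$, i.e. $-g(\mathbf{y})=\mathbf{t}-c\mathbf{1}$. Suppose that $\|\mathbf{x}-\mathbf{y}\|_\mathbf{x}\leq r_1 < 1/2$ and choose any large enough integer denominator $N$ to satisfy \[ \|H(\mathbf{x})^{1/2}\| \leq \frac{2N}{\sqrt{U}}\left( \frac{r_2-r_1}{1 + r_2}\right). \] Then every $\mathbf{x}_N \in \frac{1}{N}\mathbb{Z}^U$ with $\|\mathbf{x}_N-\mathbf{x}\|\leq \frac{\sqrt{U}}{2N}$ satisfies $\|\mathbf{x}_N - \mathbf{y}\|_{\mathbf{x}_N} \leq r_2$. In particular, taking $r_1 = r$ and $r_2 = 1/2$, we may round the certificate $\mathbf{x}$ returned by the iterative lower-bound algorithm (which returns a lower bound $c$ and a dual vector $\mathbf{x}$ satisfying $\|\mathbf{x}-\mathbf{y}\|_\mathbf{x}\leq r$, where $r\in(0,1/4]$ is the algorithm's radius parameter and $\mathbf{y}$ is the gradient certificate of $\mathbf{t}-c\mathbf{1}$) componentwise to the nearest rational vector with denominator $N$, and the resulting vector $\mathbf{x}_N$ is a rational certificate for the lower bound $c$ returned by the algorithm, i.e. $\mathbf{x}_N$ is a dual certificate of $\mathbf{t}-c\mathbf{1}$.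
   Context: $\Sigma=\Sigma^{\mathbf{g}}_{n,2\mathbf{d}}$ is a WSOS cone (polynomials $\sum_i g_i\sigma_i$ with $\sigma_i$ SOS of degree $2d_i$) with nonempty interior, identified with $\mathbb{R}^U$ via coefficient vectors in a fixed basis, $U=\dim$ of the polynomial space; $\mathbf{1}$ is the coefficient vector of the constant one polynomial, assumed in the interior of $\Sigma$; $\mathbf{t}$ is the polynomial being bounded below. $\Lambda:\mathbb{R}^U\to\mathbb{S}^{L_1}\oplus\cdots\oplus\mathbb{S}^{L_m}$ is the linear map with $\Sigma^*=\{\mathbf{x}:\Lambda(\mathbf{x})\succcurlyeq 0\}$, and $(\Sigma^* )^\circ=\{\mathbf{x}:\Lambda(\mathbf{x})\succ0\}$. The barrier is $f(\mathbf{x})=-\ln\det\Lambda(\mathbf{x})$ on $(\Sigma^* )^\circ$ with gradient $g$ and Hessian $H$; the local norm is $\|\mathbf{v}\|_\mathbf{x}=\|H(\mathbf{x})^{1/2}\mathbf{v}\|$, and $\|\cdot\|$ is the Euclidean norm (for $H(\mathbf{x})^{1/2}$, the induced operator norm). A vector $\mathbf{x}\in(\Sigma^* )^\circ$ is a dual certificate of $\mathbf{s}\in\Sigma$ if $H(\mathbf{x})^{-1}\mathbf{s}\in\Sigma^*$; the gradient certificate of $\mathbf{s}$ in the interior of $\Sigma$ is the unique $\mathbf{y}$ with $-g(\mathbf{y})=\mathbf{s}$. It is known that if $\|\mathbf{x}-\mathbf{y}\|_\mathbf{x}<1/2$ with $\mathbf{y}$ the gradient certificate of $\mathbf{s}$,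 then $\mathbf{x}$ is a dual certificate of $\mathbf{s}$. *)

theory Defs
  imports "HOL-Analysis.Analysis"
begin

definition psd :: "real^'n^'n \<Rightarrow> bool" where
  "psd A \<longleftrightarrow> transpose A = A \<and> (\<forall>v. 0 \<le> v \<bullet> (A *v v))"

definition pd :: "real^'n^'n \<Rightarrow> bool" where
  "pd A \<longleftrightarrow> transpose A = A \<and> (\<forall>v. v \<noteq> 0 \<longrightarrow> 0 < v \<bullet> (A *v v))"

definition msqrt :: "real^'n^'n \<Rightarrow> real^'n^'n" where
  "msqrt A = (THE B. psd B \<and> B ** B = A)"

definition dual_cone :: "(real^'u \<Rightarrow> real^'l^'l) \<Rightarrow> (real^'u) set" where
  "dual_cone \<Lambda> = {x. psd (\<Lambda> x)}"

definition dual_cone_int :: "(real^'u \<Rightarrow> real^'l^'l) \<Rightarrow> (real^'u) set" where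
  "dual_cone_int \<Lambda> = {x. pd (\<Lambda> x)}"

definition primal_cone :: "(real^'u \<Rightarrow> real^'l^'l) \<Rightarrow> (real^'u) set" where
  "primal_cone \<Lambda> = {s. \<forall>x \<in> dual_cone \<Lambda>. 0 \<le> s \<bullet> x}"

definition barrier :: "(real^'u \<Rightarrow> real^'l^'l) \<Rightarrow> real^'u \<Rightarrow> real" where
  "barrier \<Lambda> x = - ln (det (\<Lambda> x))"

definition grad :: "(real^'u \<Rightarrow> real^'l^'l) \<Rightarrow> real^'u \<Rightarrow> real^'u" where
  "grad \<Lambda> x = (\<chi> u. deriv (\<lambda>t. barrier \<Lambda> (x + t *\<^sub>R axis u 1)) 0)"

definition hess :: "(real^'u \<Rightarrow> real^'l^'l) \<Rightarrow> real^'u \<Rightarrow> real^'u^'u" where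
  "hess \<Lambda> x = (\<chi> u v. deriv (\<lambda>t. grad \<Lambda> (x + t *\<^sub>R axis v 1) $ u) 0)"

definition local_norm :: "(real^'u \<Rightarrow> real^'l^'l) \<Rightarrow> real^'u \<Rightarrow> real^'u \<Rightarrow> real" where
  "local_norm \<Lambda> x v = norm (msqrt (hess \<Lambda> x) *v v)"

end

theory Submission
  imports Defs
begin

lemma sym_inner:
  fixes A :: "real^'n^'n"
  assumes "transpose A = A"
  shows "(A *v x) \<bullet> y = x \<bullet> (A *v y)"
  by (metis assms dot_lmul_matrix vector_transpose_matrix)

lemma eigvec_in_subspace:
  fixes A :: "real^'n^'n"
  assumes sym: "transpose A = A" and S: "subspace S" and inv: "\<And>x. x \<in> S \<Longrightarrow> A *v x \<in> S"
    and ne: "S \<noteq> {0}"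
  obtains u \<mu> where "u \<in> S" "norm u = 1" "A *v u = \<mu> *\<^sub>R u"
proof -
  define K where "K = S \<inter> sphere 0 1"
  have "compact K" unfolding K_def
    using closed_subspace[OF S] by (metis Int_commute compact_Int_closed compact_sphere)
  moreover have "K \<noteq> {}"
  proof -
    obtain z where z: "z \<in> S" "z \<noteq> 0" using ne S subspace_0 by blast
    then have "z /\<^sub>R norm z \<in> K" unfolding K_def using S
      by (auto simp: subspace_scale)
    then show ?thesis by blast
  qed
  moreover have "continuous_on K (\<lambda>x. x \<bullet> (A *v x))"
    by (intro continuous_intros linear_continuous_on) auto
  ultimately obtain u where uK: "u \<in> K" and umax: "\<And>y. y \<in> K \<Longrightarrow> y \<bullet> (A *v y) \<le> u \<bullet> (A *v u)"
    using continuous_attains_sup[of K "\<lambda>x. x \<bullet> (A *v x)"] by auto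
  define l where "l = u \<bullet> (A *v u)"
  have uS: "u \<in> S" and un: "norm u = 1" using uK by (auto simp: K_def)
  have quad: "y \<bullet> (A *v y) \<le> l * (y \<bullet> y)" if "y \<in> S" for y
  proof (cases "y = 0")
    case True then show ?thesis by simp
  next
    case False
    have "y /\<^sub>R norm y \<in> K" using that False S by (auto simp: K_def subspace_scale)
    then have "(y /\<^sub>R norm y) \<bullet> (A *v (y /\<^sub>R norm y)) \<le> l" using umax l_def by blast
    then have "(y \<bullet> (A *v y)) / (norm y)^2 \<le> l"
      by (simp add: matrix_vector_mult_scaleR power2_eq_square divide_simps)
    then show ?thesis using False by (simp add: divide_simps power2_norm_eq_inner)
  qed
  have orth: "w \<bullet> (A *v u) = 0" if wS: "w \<in> S" and wu: "w \<bullet> u = 0" for w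
  proof -
    define a where "a = w \<bullet> (A *v u)"
    define k where "k = l * (w \<bullet> w) - w \<bullet> (A *v w)"
    have ineq: "2 * t * a \<le> t^2 * k" for t
    proof -
      have "u + t *\<^sub>R w \<in> S" using S uS wS by (simp add: subspace_add subspace_scale)
      from quad[OF this]
      have "(u + t *\<^sub>R w) \<bullet> (A *v (u + t *\<^sub>R w)) \<le> l * ((u + t *\<^sub>R w) \<bullet> (u + t *\<^sub>R w))" .
      moreover have "(u + t *\<^sub>R w) \<bullet> (A *v (u + t *\<^sub>R w)) = l + 2 * t * a + t^2 * (w \<bullet> (A *v w))"
        using sym_inner[OF sym, of w u]
        by (simp add: matrix_vector_right_distrib matrix_vector_mult_scaleR inner_add_left inner_add_right
              l_def a_def power2_eq_square algebra_simps inner_commute)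
      moreover have "(u + t *\<^sub>R w) \<bullet> (u + t *\<^sub>R w) = 1 + t^2 * (w \<bullet> w)"
        using un wu by (simp add: inner_add_left inner_add_right power2_eq_square algebra_simps
              inner_commute norm_eq_1)
      ultimately have "l + 2 * t * a + t^2 * (w \<bullet> (A *v w)) \<le> l * (1 + t^2 * (w \<bullet> w))" by simp
      then show ?thesis by (simp add: k_def algebra_simps)
    qed
    define t where "t = a / (\<bar>k\<bar> + 1)"
    have kp: "\<bar>k\<bar> + 1 > 0" by simp
    have "2 * t * a \<le> t^2 * k" by (rule ineq)
    then have "2 * t * a * (\<bar>k\<bar> + 1)^2 \<le> t^2 * k * (\<bar>k\<bar> + 1)^2"
      by (intro mult_right_mono) auto
    moreover have "2 * t * a * (\<bar>k\<bar> + 1)^2 = 2 * a^2 * (\<bar>k\<bar> + 1)"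
      using kp unfolding t_def by (simp add: power2_eq_square)
    moreover have "t^2 * k * (\<bar>k\<bar> + 1)^2 = a^2 * k"
      using kp unfolding t_def by (simp add: power2_eq_square)
    ultimately have "2 * a^2 * (\<bar>k\<bar> + 1) \<le> a^2 * k" by simp
    moreover have "a^2 * k \<le> a^2 * (\<bar>k\<bar> + 1)" by (intro mult_left_mono) auto
    ultimately have "a^2 * (\<bar>k\<bar> + 1) \<le> 0" by linarith
    then have "a^2 \<le> 0" using kp by (simp add: mult_le_0_iff)
    then show ?thesis unfolding a_def by simp
  qed
  define w where "w = A *v u - l *\<^sub>R u"
  have wS: "w \<in> S" unfolding w_def using S inv uS by (simp add: subspace_diff subspace_scale)
  have uu: "u \<bullet> u = 1" using un by (simp add: norm_eq_1)
  have "w \<bullet> u = 0" unfolding w_def l_def using uu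
    by (simp add: inner_diff_left inner_commute[of "A *v u" u])
  then have "w \<bullet> (A *v u) = 0" using orth wS by blast
  then have "w \<bullet> w = 0"
    using \<open>w \<bullet> u = 0\<close> by (simp add: w_def inner_diff_right inner_diff_left)
  then have "A *v u = l *\<^sub>R u" by (simp add: w_def)
  then show ?thesis using that uS un by blast
qed

definition diagm :: "real^'n \<Rightarrow> real^'n^'n" where
  "diagm d = (\<chi> i j. if i = j then d $ i else 0)"

lemma orthobasis_subspace:
  fixes A :: "real^'n^'n"
  assumes sym: "transpose A = A"
  shows "subspace S \<Longrightarrow> (\<And>x. x \<in> S \<Longrightarrow> A *v x \<in> S) \<Longrightarrow>
    \<exists>B. B \<subseteq> S \<and> finite B \<and> pairwise orthogonal B \<and> (\<forall>b\<in>B. norm b = 1 \<and> (\<exists>\<mu>. A *v b = \<mu> *\<^sub>R b)) \<and> S \<subseteq> span B"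
proof (induction "dim S" arbitrary: S rule: less_induct)
  case less
  show ?case
  proof (cases "S = {0}")
    case True
    then show ?thesis by (intro exI[of _ "{}"]) auto
  next
    case False
    obtain u \<mu> where uS: "u \<in> S" and un: "norm u = 1" and ue: "A *v u = \<mu> *\<^sub>R u"
      using eigvec_in_subspace[OF sym less.prems(1) less.prems(2) False] by blast
    have uu: "u \<bullet> u = 1" using un by (simp add: norm_eq_1)
    define S' where "S' = S \<inter> {x. u \<bullet> x = 0}"
    have sS': "subspace S'" unfolding S'_def using less.prems(1) subspace_hyperplane[of u]
      by (rule subspace_inter)
    have invS': "A *v x \<in> S'" if "x \<in> S'" for x
    proof -
      have "u \<bullet> (A *v x) = (A *v u) \<bullet> x" using sym_inner[OF sym, of u x] by simp
      also have "\<dots> = 0" using that ue by (simp add: S'_def)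
      finally show ?thesis using that less.prems(2) by (simp add: S'_def)
    qed
    have "span S' \<subset> span S"
    proof -
      have "S' \<subseteq> S" by (auto simp: S'_def)
      moreover have "u \<notin> S'" using uu by (simp add: S'_def)
      ultimately show ?thesis
        using uS sS' less.prems(1) by (metis span_eq_iff psubsetI span_mono)
    qed
    then have "dim S' < dim S" by (rule dim_psubset)
    from less.hyps[OF this sS' invS'] obtain B where
      B: "B \<subseteq> S'" "finite B" "pairwise orthogonal B"
         "\<forall>b\<in>B. norm b = 1 \<and> (\<exists>\<mu>. A *v b = \<mu> *\<^sub>R b)" "S' \<subseteq> span B"
      by blast
    show ?thesis
    proof (intro exI[of _ "insert u B"] conjI)
      show "insert u B \<subseteq> S" using B(1) uS by (auto simp: S'_def)
      show "finite (insert u B)" using B(2) by simp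
      show "pairwise orthogonal (insert u B)"
        using B(1,3) by (auto simp: pairwise_insert S'_def orthogonal_def inner_commute)
      show "\<forall>b\<in>insert u B. norm b = 1 \<and> (\<exists>\<mu>. A *v b = \<mu> *\<^sub>R b)"
        using B(4) un ue by auto
      show "S \<subseteq> span (insert u B)"
      proof
        fix x assume xS: "x \<in> S"
        have "x - (u \<bullet> x) *\<^sub>R u \<in> S'"
          using xS uS less.prems(1) uu
          by (simp add: S'_def subspace_diff subspace_scale inner_diff_right)
        then have "x - (u \<bullet> x) *\<^sub>R u \<in> span B" using B(5) by blast
        then have "x - (u \<bullet> x) *\<^sub>R u \<in> span (insert u B)" by (meson span_mono subset_insertI subsetD)
        moreover have "(u \<bullet> x) *\<^sub>R u \<in> span (insert u B)" by (simp add: span_base span_scale)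
        ultimately have "x - (u \<bullet> x) *\<^sub>R u + (u \<bullet> x) *\<^sub>R u \<in> span (insert u B)"
          by (rule span_add)
        then show "x \<in> span (insert u B)" by simp
      qed
    qed
  qed
qed

lemma spectral:
  fixes A :: "real^'n^'n"
  assumes sym: "transpose A = A"
  obtains Q d where "orthogonal_matrix Q" "transpose Q ** A ** Q = diagm d" "A = Q ** diagm d ** transpose Q"
proof -
  obtain B where B: "finite B" "pairwise orthogonal B"
         "\<forall>b\<in>B. norm b = 1 \<and> (\<exists>\<mu>. A *v b = \<mu> *\<^sub>R b)" "UNIV \<subseteq> span B"
    using orthobasis_subspace[OF sym, of UNIV] by auto
  have indB: "independent B"
    using B(2,3) by (intro pairwise_orthogonal_independent) auto
  have "card B = dim (UNIV :: (real^'n) set)"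
    using basis_card_eq_dim[OF _ B(4) indB] by simp
  then have cB: "card B = CARD('n)" by simp
  obtain e :: "'n \<Rightarrow> real^'n" where e: "bij_betw e UNIV B"
    using finite_same_card_bij[of "UNIV :: 'n set" B] B(1) cB by auto
  have eB: "e i \<in> B" for i using e by (auto simp: bij_betw_def)
  have einj: "e i = e j \<Longrightarrow> i = j" for i j using e by (auto simp: bij_betw_def inj_def)
  define d where "d = (\<chi> i. SOME \<mu>. A *v e i = \<mu> *\<^sub>R e i)"
  have ed: "A *v e i = (d $ i) *\<^sub>R e i" for i
  proof -
    have "\<exists>\<mu>. A *v e i = \<mu> *\<^sub>R e i" using B(3) eB by blast
    from someI_ex[OF this] show ?thesis unfolding d_def by simp
  qed
  define Q where "Q = (\<chi> i j. e j $ i)"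
  have colQ: "column j Q = e j" for j by (simp add: column_def Q_def vec_eq_iff)
  have oQ: "orthogonal_matrix Q"
    unfolding orthogonal_matrix_orthonormal_columns colQ
  proof (intro conjI allI impI)
    show "norm (e i) = 1" for i using B(3) eB by blast
    show "orthogonal (e i) (e j)" if "i \<noteq> j" for i j
      using B(2) eB einj that unfolding pairwise_def by metis
  qed
  have AQ: "A ** Q = Q ** diagm d"
  proof -
    have "(A ** Q) $ i $ j = (Q ** diagm d) $ i $ j" for i j
    proof -
      have "(A ** Q) $ i $ j = (A *v e j) $ i"
        by (simp add: matrix_matrix_mult_def matrix_vector_mult_def Q_def)
      also have "\<dots> = d $ j * e j $ i" using ed by simp
      also have "\<dots> = (Q ** diagm d) $ i $ j"
        by (simp add: matrix_matrix_mult_def diagm_def Q_def if_distrib[of "\<lambda>x. _ * x"] cong: if_cong)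
      finally show ?thesis .
    qed
    then show ?thesis by (simp add: vec_eq_iff)
  qed
  have QT: "transpose Q ** Q = mat 1" "Q ** transpose Q = mat 1"
    using oQ by (auto simp: orthogonal_matrix_def)
  have 1: "transpose Q ** A ** Q = diagm d"
    by (metis AQ QT(1) matrix_mul_assoc matrix_mul_lid)
  have 2: "A = Q ** diagm d ** transpose Q"
    by (metis AQ QT(2) matrix_mul_assoc matrix_mul_rid)
  show ?thesis using that oQ 1 2 by blast
qed

lemma diagm_mult: "diagm a ** diagm b = diagm (\<chi> i. a $ i * b $ i)"
  by (simp add: vec_eq_iff diagm_def matrix_matrix_mult_def if_distrib[of "\<lambda>x. x * _"] cong: if_cong)

lemma diagm_transpose[simp]: "transpose (diagm d) = diagm d"
  by (simp add: vec_eq_iff diagm_def transpose_def)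

lemma diagm_one: "diagm (\<chi> i. 1) = mat 1"
  by (simp add: vec_eq_iff diagm_def mat_def)

lemma diagm_mv: "diagm d *v x = (\<chi> i. d $ i * x $ i)"
  by (simp add: vec_eq_iff diagm_def matrix_vector_mult_def if_distrib[of "\<lambda>x. x * _"] cong: if_cong)

lemma diagm_quad: "x \<bullet> (diagm d *v x) = (\<Sum>i\<in>UNIV. d $ i * (x $ i)^2)"
  by (simp add: diagm_mv inner_vec_def power2_eq_square algebra_simps)

lemma quad_congr:
  fixes T M :: "real^'n^'n"
  shows "x \<bullet> ((transpose T ** M ** T) *v x) = (T *v x) \<bullet> (M *v (T *v x))"
proof -
  have "(transpose T ** M ** T) *v x = transpose T *v (M *v (T *v x))"
    by (simp add: matrix_vector_mul_assoc matrix_mul_assoc)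
  moreover have "x \<bullet> (transpose T *v y) = (T *v x) \<bullet> y" for y
    by (metis dot_lmul_matrix vector_transpose_matrix)
  ultimately show ?thesis by simp
qed

lemma transpose_inner:
  fixes T :: "real^'n^'m"
  shows "x \<bullet> (transpose T *v y) = (T *v x) \<bullet> y"
  by (metis dot_lmul_matrix vector_transpose_matrix)

lemma axis_diagm: "axis i 1 \<bullet> (diagm d *v axis i 1) = d $ i"
  by (simp add: inner_axis' diagm_mv)

lemma matrix_inv_eq:
  fixes A B :: "real^'n^'n"
  assumes "A ** B = mat 1"
  shows "matrix_inv A = B" "invertible A"
proof -
  have BA: "B ** A = mat 1" using assms matrix_left_right_inverse by blast
  show inv: "invertible A" unfolding invertible_def using assms BA by blast
  have "A ** matrix_inv A = mat 1 \<and> matrix_inv A ** A = mat 1"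
    unfolding matrix_inv_def by (rule someI[of _ B]) (use assms BA in blast)
  then have "matrix_inv A ** A = mat 1" by blast
  then have "matrix_inv A ** (A ** B) = B" by (metis matrix_mul_assoc matrix_mul_lid)
  then show "matrix_inv A = B" using assms by (simp add: matrix_mul_rid)
qed

lemma orth_axis_nonzero:
  fixes Q :: "real^'n^'n"
  assumes "orthogonal_matrix Q"
  shows "Q *v axis i 1 \<noteq> 0"
proof
  assume "Q *v axis i 1 = 0"
  then have "transpose Q *v (Q *v axis i 1) = 0" by simp
  then have "axis i (1::real) = 0" using assms
    by (simp add: matrix_vector_mul_assoc orthogonal_matrix_def)
  then show False by (simp add: axis_eq_0_iff)
qed

lemma pd_diag_pos:
  fixes A Q :: "real^'n^'n"
  assumes "pd A" "orthogonal_matrix Q" "transpose Q ** A ** Q = diagm d"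
  shows "d $ i > 0"
proof -
  have "axis i 1 \<bullet> ((transpose Q ** A ** Q) *v axis i 1) = (Q *v axis i 1) \<bullet> (A *v (Q *v axis i 1))"
    by (rule quad_congr)
  moreover have "axis i 1 \<bullet> (diagm d *v axis i 1) = d $ i"
    by (rule axis_diagm)
  moreover have "(Q *v axis i 1) \<bullet> (A *v (Q *v axis i 1)) > 0"
    using assms(1) orth_axis_nonzero[OF assms(2)] unfolding pd_def by blast
  ultimately show ?thesis using assms(3) by simp
qed

lemma psd_diag_nonneg:
  fixes A Q :: "real^'n^'n"
  assumes "psd A" "transpose Q ** A ** Q = diagm d"
  shows "d $ i \<ge> 0"
proof -
  have "axis i 1 \<bullet> ((transpose Q ** A ** Q) *v axis i 1) = (Q *v axis i 1) \<bullet> (A *v (Q *v axis i 1))"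
    by (rule quad_congr)
  moreover have "axis i 1 \<bullet> (diagm d *v axis i 1) = d $ i"
    by (rule axis_diagm)
  moreover have "(Q *v axis i 1) \<bullet> (A *v (Q *v axis i 1)) \<ge> 0"
    using assms(1) unfolding psd_def by blast
  ultimately show ?thesis using assms(2) by simp
qed

lemma whitening:
  fixes A :: "real^'n^'n"
  assumes "pd A"
  obtains P :: "real^'n^'n" where "transpose P ** A ** P = mat 1"
proof -
  have sym: "transpose A = A" using assms by (simp add: pd_def)
  obtain Q d where Q: "orthogonal_matrix Q" "transpose Q ** A ** Q = diagm d"
    using spectral[OF sym] by blast
  have dpos: "d $ i > 0" for i using pd_diag_pos[OF assms Q] .
  define s where "s = (\<chi> i. 1 / sqrt (d $ i))"
  define P where "P = Q ** diagm s"
  have "transpose P = diagm s ** transpose Q"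
    unfolding P_def by (simp add: matrix_transpose_mul)
  then have "transpose P ** A ** P = diagm s ** (transpose Q ** A ** Q) ** diagm s"
    unfolding P_def by (simp only: matrix_mul_assoc)
  also have "\<dots> = diagm (\<chi> i. 1)"
  proof -
    have "s $ i * d $ i * s $ i = 1" for i
    proof -
      have "sqrt (d $ i) * sqrt (d $ i) = d $ i" using dpos[of i] by simp
      then show ?thesis using dpos[of i] unfolding s_def by (simp add: field_simps)
    qed
    then show ?thesis using Q(2) by (simp add: diagm_mult)
  qed
  finally have "transpose P ** A ** P = mat 1" using diagm_one by metis
  then show ?thesis using that by blast
qed

lemma whitening_inv:
  fixes A P :: "real^'n^'n"
  assumes "transpose P ** A ** P = mat 1"
  shows "matrix_inv A = P ** transpose P" "invertible A" "invertible P"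
proof -
  have "(transpose P ** A) ** P = mat 1" using assms by simp
  then have 1: "P ** (transpose P ** A) = mat 1" using matrix_left_right_inverse by blast
  then have "(P ** transpose P) ** A = mat 1" by (simp add: matrix_mul_assoc)
  then have "A ** (P ** transpose P) = mat 1" using matrix_left_right_inverse by blast
  then show "matrix_inv A = P ** transpose P" "invertible A" using matrix_inv_eq by blast+
  show "invertible P" using 1 matrix_inv_eq(2) by blast
qed

lemma simdiag:
  fixes A V :: "real^'n^'n"
  assumes "pd A" "transpose V = V"
  obtains T :: "real^'n^'n" and e where "transpose T ** A ** T = mat 1" "transpose T ** V ** T = diagm e"
proof -
  obtain P :: "real^'n^'n" where P: "transpose P ** A ** P = mat 1" using whitening[OF assms(1)] by blast
  have "transpose (transpose P ** V ** P) = transpose P ** V ** P"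
    using assms(2) by (simp add: matrix_transpose_mul matrix_mul_assoc)
  then obtain R0 :: "real^'n^'n" and e where R0: "orthogonal_matrix R0" "transpose R0 ** (transpose P ** V ** P) ** R0 = diagm e"
    using spectral by blast
  have "transpose (P ** R0) ** A ** (P ** R0) = transpose R0 ** (transpose P ** A ** P) ** R0"
    by (simp add: matrix_transpose_mul matrix_mul_assoc)
  also have "\<dots> = mat 1" using R0(1) P by (simp add: orthogonal_matrix_def)
  finally have 1: "transpose (P ** R0) ** A ** (P ** R0) = mat 1" .
  have "transpose (P ** R0) ** V ** (P ** R0) = transpose R0 ** (transpose P ** V ** P) ** R0"
    by (simp add: matrix_transpose_mul matrix_mul_assoc)
  then have 2: "transpose (P ** R0) ** V ** (P ** R0) = diagm e" using R0(2) by simp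
  show ?thesis using that[OF 1 2] .
qed

lemma mv_axis: "((M::real^'n^'m) *v axis i 1) $ j = M $ j $ i"
  unfolding matrix_vector_mult_def axis_def by (simp add: if_distrib[of "\<lambda>x. _ * x"] cong: if_cong)

lemma sym_eig_sqrt_unique:
  fixes B :: "real^'n^'n"
  assumes B: "psd B" and c: "c \<ge> 0" and q: "(B ** B) *v q = (c^2) *\<^sub>R q"
  shows "B *v q = c *\<^sub>R q"
proof -
  have symB: "transpose B = B" using B by (simp add: psd_def)
  define w where "w = B *v q - c *\<^sub>R q"
  have "B *v w + c *\<^sub>R w = (B ** B) *v q - (c^2) *\<^sub>R q"
    by (simp add: w_def matrix_vector_mult_diff_distrib matrix_vector_mult_scaleR
        matrix_vector_mul_assoc[symmetric] algebra_simps power2_eq_square)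
  then have "B *v w + c *\<^sub>R w = 0" using q by simp
  then have Bw: "B *v w = - (c *\<^sub>R w)" by (simp add: eq_neg_iff_add_eq_0)
  have "0 \<le> w \<bullet> (B *v w)" using B by (simp add: psd_def)
  then have "c * (w \<bullet> w) \<le> 0" using Bw by simp
  moreover have "w \<bullet> w \<ge> 0" by simp
  moreover have "0 \<le> c * (w \<bullet> w)" using c by simp
  ultimately have cw: "c * (w \<bullet> w) = 0" by linarith
  show ?thesis
  proof (cases "c = 0")
    case True
    then have "B *v w = 0" using Bw by simp
    have "w \<bullet> w = q \<bullet> (B *v w)"
      using True unfolding w_def by (simp add: sym_inner[OF symB, symmetric])
    then have "w = 0" using \<open>B *v w = 0\<close> by simp
    then show ?thesis by (simp add: w_def)
  next
    case False
    then have "w = 0" using cw by simp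
    then show ?thesis by (simp add: w_def)
  qed
qed

lemma msqrt:
  fixes H :: "real^'n^'n"
  assumes H: "psd H"
  shows "psd (msqrt H)" "msqrt H ** msqrt H = H"
proof -
  have symH: "transpose H = H" using H by (simp add: psd_def)
  obtain Q h where Q: "orthogonal_matrix Q" "transpose Q ** H ** Q = diagm h" "H = Q ** diagm h ** transpose Q"
    using spectral[OF symH] by blast
  have QT: "transpose Q ** Q = mat 1" "Q ** transpose Q = mat 1"
    using Q(1) by (auto simp: orthogonal_matrix_def)
  have hnn: "h $ i \<ge> 0" for i using psd_diag_nonneg[OF H Q(2)] .
  define r where "r = (\<chi> i. sqrt (h $ i))"
  define R where "R = Q ** diagm r ** transpose Q"
  have symR: "transpose R = R" unfolding R_def by (simp add: matrix_transpose_mul matrix_mul_assoc)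
  have psdR: "psd R"
    unfolding psd_def
  proof (intro conjI allI symR)
    fix v
    have "v \<bullet> (R *v v) = (transpose Q *v v) \<bullet> (diagm r *v (transpose Q *v v))"
      using quad_congr[of v "transpose Q" "diagm r"] by (simp add: R_def)
    also have "\<dots> = (\<Sum>i\<in>UNIV. r $ i * ((transpose Q *v v) $ i)^2)" by (rule diagm_quad)
    also have "\<dots> \<ge> 0" by (intro sum_nonneg mult_nonneg_nonneg) (simp_all add: r_def hnn)
    finally show "0 \<le> v \<bullet> (R *v v)" .
  qed
  have RR: "R ** R = H"
  proof -
    have "R ** R = Q ** (diagm r ** (transpose Q ** Q) ** diagm r) ** transpose Q"
      unfolding R_def by (simp add: matrix_mul_assoc)
    also have "diagm r ** (transpose Q ** Q) ** diagm r = diagm h"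
      using hnn by (simp add: QT diagm_mult r_def vec_eq_iff)
    finally show ?thesis using Q(3) by simp
  qed
  have uniq: "B = R" if B: "psd B" "B ** B = H" for B
  proof -
    have HQ: "H ** Q = Q ** diagm h"
      using Q(3) QT by (metis matrix_mul_assoc matrix_mul_rid)
    have col: "B *v (Q *v axis i 1) = r $ i *\<^sub>R (Q *v axis i 1)" for i
    proof (rule sym_eig_sqrt_unique[OF B(1)])
      show "r $ i \<ge> 0" using hnn by (simp add: r_def)
      have "H *v (Q *v axis i 1) = Q *v (diagm h *v axis i 1)"
        by (simp add: matrix_vector_mul_assoc HQ)
      also have "diagm h *v axis i 1 = h $ i *\<^sub>R axis i 1"
        by (simp add: diagm_mv vec_eq_iff axis_def)
      finally have "H *v (Q *v axis i 1) = h $ i *\<^sub>R (Q *v axis i 1)"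
        by (simp add: matrix_vector_mult_scaleR)
      then show "(B ** B) *v (Q *v axis i 1) = (r $ i)^2 *\<^sub>R (Q *v axis i 1)"
        using B(2) hnn[of i] by (simp add: r_def)
    qed
    have BQ: "B ** Q = Q ** diagm r"
    proof -
      have "(B ** Q) $ j $ i = (Q ** diagm r) $ j $ i" for i j
      proof -
        have "(B ** Q) $ j $ i = (B *v (Q *v axis i 1)) $ j"
          by (simp add: matrix_vector_mul_assoc mv_axis)
        also have "\<dots> = r $ i * (Q *v axis i 1) $ j" using col by simp
        also have "\<dots> = (Q ** diagm r) $ j $ i"
          by (simp add: mv_axis matrix_matrix_mult_def diagm_def if_distrib[of "\<lambda>x. _ * x"] cong: if_cong)
        finally show ?thesis .
      qed
      then show ?thesis by (simp add: vec_eq_iff)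
    qed
    have "B = B ** Q ** transpose Q" using QT by (simp add: matrix_mul_assoc[symmetric])
    also have "\<dots> = R" unfolding R_def BQ ..
    finally show ?thesis .
  qed
  have "msqrt H = R"
    unfolding msqrt_def
  proof (rule the_equality)
    show "psd R \<and> R ** R = H" using psdR RR by blast
    fix B assume "psd B \<and> B ** B = H"
    then show "B = R" using uniq by blast
  qed
  then show "psd (msqrt H)" "msqrt H ** msqrt H = H" using psdR RR by auto
qed

lemma msqrt_norm:
  fixes H :: "real^'n^'n"
  assumes H: "psd H"
  shows "(norm (msqrt H *v v))^2 = v \<bullet> (H *v v)"
proof -
  have s: "transpose (msqrt H) = msqrt H" using msqrt(1)[OF H] by (simp add: psd_def)
  have "(norm (msqrt H *v v))^2 = (msqrt H *v v) \<bullet> (msqrt H *v v)" by (simp add: power2_norm_eq_inner)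
  also have "\<dots> = v \<bullet> (msqrt H *v (msqrt H *v v))" by (rule sym_inner[OF s])
  also have "\<dots> = v \<bullet> (H *v v)" using msqrt(2)[OF H] by (simp add: matrix_vector_mul_assoc)
  finally show ?thesis .
qed

lemma matrix_add_rdistrib': "((B + C) ** A) = (B ** A) + (C ** A)"
  for A B C :: "real^'n^'n"
  by (simp add: matrix_matrix_mult_def vec_eq_iff sum.distrib[symmetric] algebra_simps)

lemma congr_add:
  fixes T A L :: "real^'n^'n"
  shows "transpose T ** (A + t *\<^sub>R L) ** T = transpose T ** A ** T + t *\<^sub>R (transpose T ** L ** T)"
  by (simp add: matrix_add_ldistrib matrix_add_rdistrib' matrix_scalar_ac scalar_matrix_assoc)

lemma det_congr:
  fixes T M :: "real^'n^'n"
  shows "det (transpose T ** M ** T) = (det T)^2 * det M"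
  by (simp add: det_mul power2_eq_square)

lemma det_diagm: "det (diagm d) = (\<Prod>i\<in>UNIV. d $ i)"
  by (subst det_diagonal) (auto simp: diagm_def)

lemma diagm_add: "mat 1 + t *\<^sub>R diagm e = diagm (\<chi> i. 1 + t * e $ i)"
  by (simp add: vec_eq_iff diagm_def mat_def)

lemma trace_diagm_mult: "trace (diagm d ** N) = (\<Sum>i\<in>UNIV. d $ i * N $ i $ i)"
  by (simp add: trace_def matrix_matrix_mult_def diagm_def if_distrib[of "\<lambda>x. x * _"] cong: if_cong)

lemma lin_line:
  assumes "linear f"
  shows "f (z + t *\<^sub>R a) = f z + t *\<^sub>R f a"
  using assms by (simp add: linear_add linear_scale)

lemma grad_formula:
  fixes \<Lambda> :: "real^'u \<Rightarrow> real^'l^'l"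
  assumes lin: "linear \<Lambda>" and sym: "\<forall>z. transpose (\<Lambda> z) = \<Lambda> z" and z: "pd (\<Lambda> z)"
  shows "grad \<Lambda> z $ u = - trace (matrix_inv (\<Lambda> z) ** \<Lambda> (axis u 1))"
proof -
  define A where "A = \<Lambda> z"
  define L where "L = \<Lambda> (axis u 1)"
  obtain T :: "real^'l^'l" and e where T: "transpose T ** A ** T = mat 1" "transpose T ** L ** T = diagm e"
    using simdiag[of A L] z sym unfolding A_def L_def by blast
  have inv: "matrix_inv A = T ** transpose T" "invertible T" using whitening_inv[OF T(1)] by auto
  define c where "c = (det T)^2"
  have c: "c \<noteq> 0" using inv(2) by (simp add: c_def invertible_det_nz)
  have cpos: "c > 0" using c by (simp add: c_def)
  define p where "p = (\<lambda>t::real. \<Prod>i\<in>UNIV. 1 + t * e $ i)"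
  have detline: "det (\<Lambda> (z + t *\<^sub>R axis u 1)) = p t / c" for t
  proof -
    have "c * det (\<Lambda> (z + t *\<^sub>R axis u 1)) = det (transpose T ** (A + t *\<^sub>R L) ** T)"
      by (simp add: det_congr c_def lin_line[OF lin] A_def L_def)
    also have "\<dots> = p t" by (simp add: congr_add T diagm_add det_diagm p_def)
    finally show ?thesis using c by (simp add: field_simps)
  qed
  have p0: "p 0 = 1" by (simp add: p_def)
  have dp: "(p has_real_derivative (\<Sum>i\<in>UNIV. e $ i)) (at 0)"
  proof -
    have "(p has_real_derivative (\<Sum>i\<in>UNIV. e $ i * (\<Prod>j\<in>UNIV - {i}. 1 + 0 * e $ j))) (at 0)"
      unfolding p_def
      by (rule has_field_derivative_prod) (auto intro!: derivative_eq_intros)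
    then show ?thesis by simp
  qed
  have "((\<lambda>t. barrier \<Lambda> (z + t *\<^sub>R axis u 1)) has_real_derivative - (\<Sum>i\<in>UNIV. e $ i)) (at 0)"
  proof -
    have "((\<lambda>t. - ln (p t / c)) has_real_derivative - ((\<Sum>i\<in>UNIV. e $ i) / c / (p 0 / c))) (at 0)"
      using cpos p0 by (auto intro!: derivative_eq_intros dp simp: field_simps)
    then show ?thesis using c p0 by (simp add: barrier_def detline)
  qed
  then have "grad \<Lambda> z $ u = - (\<Sum>i\<in>UNIV. e $ i)"
    unfolding grad_def by (simp add: DERIV_imp_deriv)
  also have "(\<Sum>i\<in>UNIV. e $ i) = trace (matrix_inv A ** L)"
  proof -
    have "(\<Sum>i\<in>UNIV. e $ i) = trace (diagm e)" by (simp add: trace_def diagm_def)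
    also have "\<dots> = trace ((transpose T ** L) ** T)" using T(2) by simp
    also have "\<dots> = trace (T ** (transpose T ** L))" by (rule trace_mul_sym)
    also have "\<dots> = trace (matrix_inv A ** L)" by (simp add: inv matrix_mul_assoc)
    finally show ?thesis .
  qed
  finally show ?thesis by (simp add: A_def L_def)
qed

lemma pd_congr:
  fixes T M :: "real^'n^'n"
  assumes T: "invertible T" and sM: "transpose M = M" and D: "transpose T ** M ** T = diagm d"
    and pos: "\<And>i. d $ i > 0"
  shows "pd M"
  unfolding pd_def
proof (intro conjI allI impI sM)
  fix x :: "real^'n" assume x: "x \<noteq> 0"
  obtain Ti where Ti: "T ** Ti = mat 1" using T unfolding invertible_def by blast
  define y where "y = Ti *v x"
  have Ty: "T *v y = x" using Ti by (simp add: y_def matrix_vector_mul_assoc)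
  have "y \<noteq> 0" using Ty x by auto
  then obtain i where i: "y $ i \<noteq> 0" by (auto simp: vec_eq_iff)
  have "x \<bullet> (M *v x) = y \<bullet> ((transpose T ** M ** T) *v y)" using quad_congr[of y T M] Ty by simp
  also have "\<dots> = (\<Sum>i\<in>UNIV. d $ i * (y $ i)^2)" using D by (simp add: diagm_quad)
  also have "\<dots> \<ge> d $ i * (y $ i)^2"
    by (rule member_le_sum) (auto intro: mult_nonneg_nonneg less_imp_le[OF pos])
  finally show "0 < x \<bullet> (M *v x)" using pos[of i] i
    by (meson less_le_trans mult_pos_pos zero_less_power2)
qed

lemma inv_congr:
  fixes T M :: "real^'n^'n"
  assumes D: "transpose T ** M ** T = diagm d" and nz: "\<And>i. d $ i \<noteq> 0"
  shows "matrix_inv M = T ** diagm (\<chi> i. 1 / d $ i) ** transpose T"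
proof -
  define Di where "Di = diagm (\<chi> i. 1 / d $ i)"
  have "diagm d ** Di = mat 1"
    using nz by (simp add: Di_def diagm_mult diagm_one[symmetric] vec_eq_iff)
  then have "(transpose T ** M) ** (T ** Di) = mat 1" using D by (simp add: matrix_mul_assoc)
  then have "(T ** Di) ** (transpose T ** M) = mat 1" using matrix_left_right_inverse by blast
  then have "(T ** Di ** transpose T) ** M = mat 1" by (simp add: matrix_mul_assoc)
  then have "M ** (T ** Di ** transpose T) = mat 1" using matrix_left_right_inverse by blast
  then show ?thesis unfolding Di_def by (rule matrix_inv_eq(1))
qed

lemma hess_formula:
  fixes \<Lambda> :: "real^'u \<Rightarrow> real^'l^'l"
  assumes lin: "linear \<Lambda>" and sym: "\<forall>z. transpose (\<Lambda> z) = \<Lambda> z" and z: "pd (\<Lambda> z)"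
  shows "hess \<Lambda> z $ u $ v = trace (\<Lambda> (axis v 1) ** matrix_inv (\<Lambda> z) ** \<Lambda> (axis u 1) ** matrix_inv (\<Lambda> z))"
proof -
  define A where "A = \<Lambda> z"
  define Lv where "Lv = \<Lambda> (axis v 1)"
  define Lu where "Lu = \<Lambda> (axis u 1)"
  obtain T :: "real^'l^'l" and e where T: "transpose T ** A ** T = mat 1" "transpose T ** Lv ** T = diagm e"
    using simdiag[of A Lv] z sym unfolding A_def Lv_def by blast
  have inv: "matrix_inv A = T ** transpose T" "invertible T" using whitening_inv[OF T(1)] by auto
  define N where "N = transpose T ** Lu ** T"
  define S where "S = (\<Sum>i\<in>UNIV. \<bar>e $ i\<bar>)"
  define \<delta> where "\<delta> = 1 / (S + 1)"
  have S0: "S \<ge> 0" unfolding S_def by (intro sum_nonneg) auto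
  have \<delta>: "\<delta> > 0" using S0 by (simp add: \<delta>_def)
  have dpos: "1 + t * e $ i > 0" if t: "\<bar>t\<bar> < \<delta>" for t i
  proof -
    have "\<bar>e $ i\<bar> \<le> S" unfolding S_def by (rule member_le_sum) auto
    then have "\<bar>t * e $ i\<bar> \<le> \<bar>t\<bar> * S" by (simp add: abs_mult mult_left_mono)
    also have "\<dots> \<le> \<bar>t\<bar> * (S + 1)" by (simp add: mult_left_mono)
    also have "\<dots> < \<delta> * (S + 1)" using t S0 by (intro mult_strict_right_mono) auto
    also have "\<dots> = 1" using S0 by (simp add: \<delta>_def)
    finally show ?thesis by linarith
  qed
  define \<phi> where "\<phi> = (\<lambda>t::real. - (\<Sum>i\<in>UNIV. N $ i $ i / (1 + t * e $ i)))"
  have geq: "grad \<Lambda> (z + t *\<^sub>R axis v 1) $ u = \<phi> t" if t: "\<bar>t\<bar> < \<delta>" for t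
  proof -
    define M where "M = \<Lambda> (z + t *\<^sub>R axis v 1)"
    have M: "M = A + t *\<^sub>R Lv" by (simp add: M_def lin_line[OF lin] A_def Lv_def)
    have D: "transpose T ** M ** T = diagm (\<chi> i. 1 + t * e $ i)"
      by (simp add: M congr_add T diagm_add)
    have pdM: "pd M"
      by (rule pd_congr[OF inv(2) _ D]) (use sym dpos[OF t] in \<open>auto simp: M_def\<close>)
    have Minv: "matrix_inv M = T ** diagm (\<chi> i. 1 / (1 + t * e $ i)) ** transpose T"
      using inv_congr[OF D] dpos[OF t] by (simp add: less_imp_neq[symmetric])
    have "grad \<Lambda> (z + t *\<^sub>R axis v 1) $ u = - trace (matrix_inv M ** Lu)"
      using grad_formula[OF lin sym pdM[unfolded M_def]] by (simp add: M_def Lu_def)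
    also have "trace (matrix_inv M ** Lu) = trace (diagm (\<chi> i. 1 / (1 + t * e $ i)) ** N)"
    proof -
      have "trace (matrix_inv M ** Lu) = trace (T ** (diagm (\<chi> i. 1 / (1 + t * e $ i)) ** transpose T ** Lu))"
        by (simp add: Minv matrix_mul_assoc)
      also have "\<dots> = trace ((diagm (\<chi> i. 1 / (1 + t * e $ i)) ** transpose T ** Lu) ** T)"
        by (rule trace_mul_sym)
      also have "\<dots> = trace (diagm (\<chi> i. 1 / (1 + t * e $ i)) ** N)"
        by (simp add: N_def matrix_mul_assoc)
      finally show ?thesis .
    qed
    also have "\<dots> = (\<Sum>i\<in>UNIV. N $ i $ i / (1 + t * e $ i))"
      by (simp add: trace_diagm_mult)
    finally show ?thesis by (simp add: \<phi>_def)
  qed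
  have d\<phi>: "(\<phi> has_real_derivative (\<Sum>i\<in>UNIV. e $ i * N $ i $ i)) (at 0)"
  proof -
    have "(\<phi> has_real_derivative - (\<Sum>i\<in>UNIV. - (N $ i $ i * (0 * 0 + e $ i)) / (1 + 0 * e $ i)^2)) (at 0)"
      unfolding \<phi>_def by (auto intro!: derivative_eq_intros simp: power2_eq_square)
    then show ?thesis by (simp add: sum_negf mult.commute)
  qed
  have "((\<lambda>t. grad \<Lambda> (z + t *\<^sub>R axis v 1) $ u) has_real_derivative (\<Sum>i\<in>UNIV. e $ i * N $ i $ i)) (at 0)"
    using has_field_derivative_transform_within[OF d\<phi> \<delta>, of "\<lambda>t. grad \<Lambda> (z + t *\<^sub>R axis v 1) $ u"]
    using geq by (simp add: dist_real_def)
  then have "hess \<Lambda> z $ u $ v = (\<Sum>i\<in>UNIV. e $ i * N $ i $ i)"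
    unfolding hess_def by (simp add: DERIV_imp_deriv)
  also have "\<dots> = trace (Lv ** matrix_inv A ** Lu ** matrix_inv A)"
  proof -
    have "(\<Sum>i\<in>UNIV. e $ i * N $ i $ i) = trace (diagm e ** N)" by (simp add: trace_diagm_mult)
    also have "\<dots> = trace (transpose T ** (Lv ** T ** transpose T ** Lu ** T))"
      using T(2) by (simp add: N_def matrix_mul_assoc)
    also have "\<dots> = trace ((Lv ** T ** transpose T ** Lu ** T) ** transpose T)"
      by (rule trace_mul_sym)
    also have "\<dots> = trace (Lv ** matrix_inv A ** Lu ** matrix_inv A)"
      by (simp add: inv matrix_mul_assoc)
    finally show ?thesis .
  qed
  finally show ?thesis by (simp add: A_def Lu_def Lv_def)
qed

definition fro :: "real^'n^'n \<Rightarrow> real" where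
  "fro M = (\<Sum>i\<in>UNIV. \<Sum>j\<in>UNIV. (M $ i $ j)^2)"

lemma lin_expand:
  fixes f :: "real^'u \<Rightarrow> 'b::real_vector"
  assumes "linear f"
  shows "f w = (\<Sum>u\<in>UNIV. w $ u *\<^sub>R f (axis u 1))"
proof -
  have "w = (\<Sum>u\<in>UNIV. w $ u *\<^sub>R axis u 1)"
    using basis_expansion[of w] by (simp add: scalar_mult_eq_scaleR)
  then have "f w = f (\<Sum>u\<in>UNIV. w $ u *\<^sub>R axis u 1)" by simp
  also have "\<dots> = (\<Sum>u\<in>UNIV. w $ u *\<^sub>R f (axis u 1))"
    using assms by (simp add: linear_sum linear_scale)
  finally show ?thesis .
qed

lemma congr_linear: "linear (\<lambda>X::real^'n^'n. transpose T ** X ** T)" for T :: "real^'n^'n"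
  by (rule linearI) (simp_all add: matrix_add_ldistrib matrix_add_rdistrib' matrix_scalar_ac scalar_matrix_assoc)

lemma trace_mult_entries: "trace ((X::real^'n^'n) ** Y) = (\<Sum>i\<in>UNIV. \<Sum>j\<in>UNIV. X $ i $ j * Y $ j $ i)"
  by (simp add: trace_def matrix_matrix_mult_def)

lemma sum4_swap:
  "(\<Sum>i\<in>A. \<Sum>j\<in>B. \<Sum>u\<in>C. \<Sum>v\<in>D. f i j u v) = (\<Sum>u\<in>C. \<Sum>v\<in>D. \<Sum>i\<in>A. \<Sum>j\<in>B. f i j u v)"
proof -
  have "(\<Sum>i\<in>A. \<Sum>j\<in>B. \<Sum>u\<in>C. \<Sum>v\<in>D. f i j u v) = (\<Sum>i\<in>A. \<Sum>u\<in>C. \<Sum>j\<in>B. \<Sum>v\<in>D. f i j u v)"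
    by (rule sum.cong[OF refl], rule sum.swap)
  also have "\<dots> = (\<Sum>u\<in>C. \<Sum>i\<in>A. \<Sum>j\<in>B. \<Sum>v\<in>D. f i j u v)" by (rule sum.swap)
  also have "\<dots> = (\<Sum>u\<in>C. \<Sum>i\<in>A. \<Sum>v\<in>D. \<Sum>j\<in>B. f i j u v)"
    by (rule sum.cong[OF refl], rule sum.cong[OF refl], rule sum.swap)
  also have "\<dots> = (\<Sum>u\<in>C. \<Sum>v\<in>D. \<Sum>i\<in>A. \<Sum>j\<in>B. f i j u v)"
    by (rule sum.cong[OF refl], rule sum.swap)
  finally show ?thesis .
qed

lemma hess_quad:
  fixes \<Lambda> :: "real^'u \<Rightarrow> real^'l^'l"
  assumes lin: "linear \<Lambda>" and sym: "\<forall>z. transpose (\<Lambda> z) = \<Lambda> z" and z: "pd (\<Lambda> z)"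
    and T: "transpose (T::real^'l^'l) ** \<Lambda> z ** T = mat 1"
  shows "w \<bullet> (hess \<Lambda> z *v w) = fro (transpose T ** \<Lambda> w ** T)"
proof -
  define N where "N = (\<lambda>u. transpose T ** \<Lambda> (axis u 1) ** T)"
  have Nsym: "N u $ j $ i = N u $ i $ j" for u i j
  proof -
    have "transpose (N u) = N u" using sym by (simp add: N_def matrix_transpose_mul matrix_mul_assoc)
    then show ?thesis by (metis transpose_def vec_lambda_beta)
  qed
  have inv: "matrix_inv (\<Lambda> z) = T ** transpose T" using whitening_inv[OF T] by auto
  have H: "hess \<Lambda> z $ u $ v = (\<Sum>i\<in>UNIV. \<Sum>j\<in>UNIV. N u $ i $ j * N v $ i $ j)" for u v
  proof -
    have "hess \<Lambda> z $ u $ v = trace (\<Lambda> (axis v 1) ** (T ** transpose T) ** \<Lambda> (axis u 1) ** (T ** transpose T))"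
      using hess_formula[OF lin sym z] inv by simp
    also have "\<dots> = trace (transpose T ** (\<Lambda> (axis v 1) ** T ** transpose T ** \<Lambda> (axis u 1) ** T))"
      by (metis trace_mul_sym matrix_mul_assoc)
    also have "\<dots> = trace (N v ** N u)" by (simp add: N_def matrix_mul_assoc)
    also have "\<dots> = (\<Sum>i\<in>UNIV. \<Sum>j\<in>UNIV. N u $ i $ j * N v $ i $ j)"
      by (simp add: trace_mult_entries Nsym mult.commute)
    finally show ?thesis .
  qed
  have Nw: "transpose T ** \<Lambda> w ** T = (\<Sum>u\<in>UNIV. w $ u *\<^sub>R N u)"
    unfolding N_def
    using lin_expand[OF linear_compose[OF lin congr_linear[of T]], of w] by (simp add: o_def)
  have "fro (transpose T ** \<Lambda> w ** T) =
      (\<Sum>i\<in>UNIV. \<Sum>j\<in>UNIV. (\<Sum>u\<in>UNIV. w $ u * N u $ i $ j) * (\<Sum>v\<in>UNIV. w $ v * N v $ i $ j))"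
    unfolding fro_def Nw by (simp add: power2_eq_square)
  also have "\<dots> = (\<Sum>i\<in>UNIV. \<Sum>j\<in>UNIV. \<Sum>u\<in>UNIV. \<Sum>v\<in>UNIV. w $ u * w $ v * (N u $ i $ j * N v $ i $ j))"
    by (simp add: sum_product mult_ac)
  also have "\<dots> = (\<Sum>u\<in>UNIV. \<Sum>v\<in>UNIV. \<Sum>i\<in>UNIV. \<Sum>j\<in>UNIV. w $ u * w $ v * (N u $ i $ j * N v $ i $ j))"
    by (rule sum4_swap)
  also have "\<dots> = (\<Sum>u\<in>UNIV. \<Sum>v\<in>UNIV. w $ u * w $ v * hess \<Lambda> z $ u $ v)"
    by (simp add: H sum_distrib_left)
  also have "\<dots> = w \<bullet> (hess \<Lambda> z *v w)"
    by (simp add: inner_vec_def matrix_vector_mult_def sum_distrib_left mult_ac)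
  finally show ?thesis ..
qed

lemma fro_nonneg: "fro M \<ge> 0"
  unfolding fro_def by (intro sum_nonneg) auto

lemma hess_psd:
  fixes \<Lambda> :: "real^'u \<Rightarrow> real^'l^'l"
  assumes lin: "linear \<Lambda>" and sym: "\<forall>z. transpose (\<Lambda> z) = \<Lambda> z" and z: "pd (\<Lambda> z)"
  shows "psd (hess \<Lambda> z)"
proof -
  obtain T :: "real^'l^'l" where T: "transpose T ** \<Lambda> z ** T = mat 1" using whitening[OF z] by blast
  have "hess \<Lambda> z $ u $ v = hess \<Lambda> z $ v $ u" for u v
  proof -
    define Ai where "Ai = matrix_inv (\<Lambda> z)"
    have "hess \<Lambda> z $ u $ v = trace ((\<Lambda> (axis v 1) ** Ai) ** (\<Lambda> (axis u 1) ** Ai))"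
      using hess_formula[OF lin sym z] by (simp add: Ai_def matrix_mul_assoc)
    also have "\<dots> = trace ((\<Lambda> (axis u 1) ** Ai) ** (\<Lambda> (axis v 1) ** Ai))" by (rule trace_mul_sym)
    also have "\<dots> = hess \<Lambda> z $ v $ u"
      using hess_formula[OF lin sym z] by (simp add: Ai_def matrix_mul_assoc)
    finally show ?thesis .
  qed
  then have "transpose (hess \<Lambda> z) = hess \<Lambda> z" by (simp add: transpose_def vec_eq_iff)
  moreover have "0 \<le> w \<bullet> (hess \<Lambda> z *v w)" for w
    using hess_quad[OF lin sym z T] fro_nonneg by simp
  ultimately show ?thesis by (simp add: psd_def)
qed

lemma local_norm_sq:
  fixes \<Lambda> :: "real^'u \<Rightarrow> real^'l^'l"
  assumes lin: "linear \<Lambda>" and sym: "\<forall>z. transpose (\<Lambda> z) = \<Lambda> z" and z: "pd (\<Lambda> z)"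
    and T: "transpose (T::real^'l^'l) ** \<Lambda> z ** T = mat 1"
  shows "(local_norm \<Lambda> z w)^2 = fro (transpose T ** \<Lambda> w ** T)"
  unfolding local_norm_def msqrt_norm[OF hess_psd[OF lin sym z]] hess_quad[OF lin sym z T] ..

lemma local_norm_nonneg: "local_norm \<Lambda> z w \<ge> 0"
  by (simp add: local_norm_def)

lemma diag_sandwich: "(diagm a ** N ** diagm b) $ i $ j = a $ i * N $ i $ j * b $ j"
  by (simp add: matrix_matrix_mult_def diagm_def if_distrib[of "\<lambda>x. x * _"] if_distrib[of "\<lambda>x. _ * x"]
      cong: if_cong)

lemma fro_diagm: "fro (diagm e) = (\<Sum>i\<in>UNIV. (e $ i)^2)"
  unfolding fro_def diagm_def by (simp add: if_distrib[of "\<lambda>x. x^2"] cong: if_cong)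

lemma dikin:
  fixes \<Lambda> :: "real^'u \<Rightarrow> real^'l^'l"
  assumes lin: "linear \<Lambda>" and sym: "\<forall>z. transpose (\<Lambda> z) = \<Lambda> z" and x: "pd (\<Lambda> x)"
    and s: "local_norm \<Lambda> x v < 1"
  shows "pd (\<Lambda> (x + v))"
    "local_norm \<Lambda> (x + v) w \<le> local_norm \<Lambda> x w / (1 - local_norm \<Lambda> x v)"
proof -
  define s where "s = local_norm \<Lambda> x v"
  have s0: "s \<ge> 0" by (simp add: s_def local_norm_nonneg)
  have s1: "s < 1" using assms by (simp add: s_def)
  obtain T :: "real^'l^'l" and e where T: "transpose T ** \<Lambda> x ** T = mat 1" "transpose T ** \<Lambda> v ** T = diagm e"
    using simdiag[of "\<Lambda> x" "\<Lambda> v"] x sym by blast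
  have invT: "invertible T" using whitening_inv[OF T(1)] by auto
  have "s^2 = (\<Sum>i\<in>UNIV. (e $ i)^2)"
    using local_norm_sq[OF lin sym x T(1), of v] T(2) by (simp add: s_def fro_diagm)
  moreover have "(e $ i)^2 \<le> (\<Sum>i\<in>UNIV. (e $ i)^2)" for i
    by (rule member_le_sum) auto
  ultimately have "(e $ i)^2 \<le> s^2" for i by simp
  then have "\<bar>e $ i\<bar> \<le> \<bar>s\<bar>" for i by (simp add: abs_le_square_iff)
  then have eabs: "\<bar>e $ i\<bar> \<le> s" for i using s0 by simp
  have epos: "1 + e $ i \<ge> 1 - s" for i using eabs[of i] unfolding abs_le_iff by linarith
  have epos': "1 + e $ i > 0" for i using epos[of i] s1 by linarith
  have D: "transpose T ** \<Lambda> (x + v) ** T = diagm (\<chi> i. 1 + e $ i)"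
    using congr_add[of T "\<Lambda> x" 1 "\<Lambda> v"] T lin_line[OF lin, of x 1 v] diagm_add[of 1 e] by simp
  show pdxv: "pd (\<Lambda> (x + v))"
    by (rule pd_congr[OF invT _ D]) (use sym epos' in auto)
  define g where "g = (\<chi> i. 1 / sqrt (1 + e $ i))"
  define T' where "T' = T ** diagm g"
  have "transpose T' ** \<Lambda> (x + v) ** T' = diagm g ** (transpose T ** \<Lambda> (x + v) ** T) ** diagm g"
    unfolding T'_def by (simp add: matrix_transpose_mul matrix_mul_assoc)
  also have "\<dots> = diagm (\<chi> i. 1)"
  proof -
    have "g $ i * (1 + e $ i) * g $ i = 1" for i
    proof -
      have "sqrt (1 + e $ i) * sqrt (1 + e $ i) = 1 + e $ i" using epos'[of i] by simp
      then show ?thesis using epos'[of i] unfolding g_def by (simp add: field_simps)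
    qed
    then show ?thesis using D by (simp add: diagm_mult)
  qed
  finally have T': "transpose T' ** \<Lambda> (x + v) ** T' = mat 1" by (simp add: diagm_one)
  define N where "N = transpose T ** \<Lambda> w ** T"
  have "(local_norm \<Lambda> (x + v) w)^2 = fro (transpose T' ** \<Lambda> w ** T')"
    by (rule local_norm_sq[OF lin sym pdxv T'])
  also have "transpose T' ** \<Lambda> w ** T' = diagm g ** N ** diagm g"
    unfolding T'_def N_def by (simp add: matrix_transpose_mul matrix_mul_assoc)
  also have "fro (diagm g ** N ** diagm g) = (\<Sum>i\<in>UNIV. \<Sum>j\<in>UNIV. (g $ i)^2 * (N $ i $ j)^2 * (g $ j)^2)"
    unfolding fro_def diag_sandwich by (simp only: power_mult_distrib)
  also have "\<dots> \<le> (\<Sum>i\<in>UNIV. \<Sum>j\<in>UNIV. (1 / (1 - s))^2 * (N $ i $ j)^2)"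
  proof (intro sum_mono)
    fix i j
    have gi: "(g $ k)^2 \<le> 1 / (1 - s)" for k
    proof -
      have "(g $ k)^2 = 1 / (1 + e $ k)" using epos'[of k] by (simp add: g_def power_divide)
      also have "\<dots> \<le> 1 / (1 - s)" using epos[of k] s1 by (intro divide_left_mono) auto
      finally show ?thesis .
    qed
    have "(g $ i)^2 * (g $ j)^2 \<le> (1 / (1 - s)) * (1 / (1 - s))"
      by (intro mult_mono gi) (use s1 in auto)
    then have "(g $ i)^2 * (g $ j)^2 \<le> (1 / (1 - s))^2" by (simp add: power2_eq_square)
    then have "(g $ i)^2 * (g $ j)^2 * (N $ i $ j)^2 \<le> (1 / (1 - s))^2 * (N $ i $ j)^2"
      by (intro mult_right_mono) auto
    then show "(g $ i)^2 * (N $ i $ j)^2 * (g $ j)^2 \<le> (1 / (1 - s))^2 * (N $ i $ j)^2"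
      by (simp only: mult.commute mult.left_commute)
  qed
  also have "\<dots> = (1 / (1 - s))^2 * fro N"
    by (simp add: fro_def sum_distrib_left)
  also have "\<dots> = (local_norm \<Lambda> x w / (1 - s))^2"
    using local_norm_sq[OF lin sym x T(1), of w] by (simp add: N_def power_divide)
  finally have sq: "(local_norm \<Lambda> (x + v) w)^2 \<le> (local_norm \<Lambda> x w / (1 - s))^2" .
  have nn: "0 \<le> local_norm \<Lambda> x w / (1 - s)"
    using s1 by (intro divide_nonneg_pos local_norm_nonneg) simp
  have "local_norm \<Lambda> (x + v) w \<le> local_norm \<Lambda> x w / (1 - s)"
    by (rule power2_le_imp_le[OF sq nn])
  then show "local_norm \<Lambda> (x + v) w \<le> local_norm \<Lambda> x w / (1 - local_norm \<Lambda> x v)"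
    by (simp add: s_def)
qed

theorem lemma7:
  fixes \<Lambda> :: "real^'u \<Rightarrow> real^'l^'l"
    and t one x y xN :: "real^'u"
    and c r1 r2 :: real and N :: nat
  assumes lin: "linear \<Lambda>"
    and sym: "\<forall>z. transpose (\<Lambda> z) = \<Lambda> z"
    and one_int: "one \<in> interior (primal_cone \<Lambda>)"
    and x_int: "x \<in> dual_cone_int \<Lambda>"
    and y_int: "y \<in> dual_cone_int \<Lambda>"
    and y_grad: "- grad \<Lambda> y = t - c *\<^sub>R one"
    and r1: "local_norm \<Lambda> x (x - y) \<le> r1" "r1 < 1/2"
    and r12: "r1 \<le> r2"
    and Npos: "0 < N"
    and N_large: "onorm (\<lambda>v. msqrt (hess \<Lambda> x) *v v)
                    \<le> (2 * real N / sqrt (real CARD('u))) * ((r2 - r1) / (1 + r2))"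
    and xN_grid: "\<forall>u. real N * (xN $ u) \<in> \<int>"
    and xN_close: "norm (xN - x) \<le> sqrt (real CARD('u)) / (2 * real N)"
  shows "xN \<in> dual_cone_int \<Lambda> \<and> local_norm \<Lambda> xN (xN - y) \<le> r2"
proof -
  have xpd: "pd (\<Lambda> x)" using x_int by (simp add: dual_cone_int_def)
  define B where "B = msqrt (hess \<Lambda> x)"
  define d where "d = xN - x"
  define \<delta> where "\<delta> = (r2 - r1) / (1 + r2)"
  define U where "U = sqrt (real CARD('u))"
  have U: "U > 0" by (simp add: U_def)
  have Nr: "real N > 0" using Npos by simp
  have r1nn: "r1 \<ge> 0" using r1(1) local_norm_nonneg[of \<Lambda> x "x - y"] by linarith
  have r2nn: "r2 \<ge> 0" using r1nn r12 by linarith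
  have \<delta>0: "\<delta> \<ge> 0" using r12 r2nn by (simp add: \<delta>_def)
  have \<delta>1: "\<delta> < 1" using r1nn r2nn by (simp add: \<delta>_def divide_less_eq)
  have bl: "bounded_linear (\<lambda>v. B *v v)" by simp
  have "norm (B *v d) \<le> onorm (\<lambda>v. B *v v) * norm d" by (rule onorm[OF bl])
  also have "\<dots> \<le> (2 * real N / U * \<delta>) * (U / (2 * real N))"
    using N_large xN_close onorm_pos_le[OF bl] U Nr \<delta>0
    by (intro mult_mono) (auto simp: B_def d_def \<delta>_def U_def)
  also have "\<dots> = \<delta>" using U Nr by (simp add: field_simps)
  finally have sd: "norm (B *v d) \<le> \<delta>" .
  define s where "s = local_norm \<Lambda> x d"
  have s_eq: "s = norm (B *v d)" by (simp add: s_def local_norm_def B_def)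
  have s0: "s \<ge> 0" by (simp add: s_def local_norm_nonneg)
  have s1: "s < 1" using sd \<delta>1 s_eq by simp
  have xd: "x + d = xN" by (simp add: d_def)
  have pdN: "pd (\<Lambda> xN)" using dikin(1)[OF lin sym xpd s1[unfolded s_def]] xd by simp
  have ln1: "local_norm \<Lambda> xN (xN - y) \<le> local_norm \<Lambda> x (xN - y) / (1 - s)"
    using dikin(2)[OF lin sym xpd s1[unfolded s_def], of "xN - y"] xd by (simp add: s_def)
  have "local_norm \<Lambda> x (xN - y) = norm (B *v d + B *v (x - y))"
    by (simp add: local_norm_def B_def d_def matrix_vector_right_distrib[symmetric])
  also have "\<dots> \<le> norm (B *v d) + norm (B *v (x - y))" by (rule norm_triangle_ineq)
  also have "\<dots> \<le> s + r1" using r1(1) s_eq by (simp add: local_norm_def B_def)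
  finally have ln2: "local_norm \<Lambda> x (xN - y) \<le> s + r1" .
  have "local_norm \<Lambda> x (xN - y) / (1 - s) \<le> (s + r1) / (1 - s)"
    using ln2 s1 by (intro divide_right_mono) auto
  also have "(s + r1) / (1 - s) \<le> r2"
  proof -
    have "s * (1 + r2) \<le> r2 - r1"
      using sd s_eq r2nn by (simp add: \<delta>_def pos_le_divide_eq)
    then have "s + r1 \<le> r2 * (1 - s)" by (simp add: algebra_simps)
    then show ?thesis using s1 by (simp add: pos_divide_le_eq)
  qed
  finally show ?thesis using ln1 pdN by (simp add: dual_cone_int_def)
qed

end
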